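(* Let $\mathcal{H}_C=\mathcal{H}_{A_1}\oplus\cdots\oplus\mathcal{H}_{A_n}$ be a finite-dimensional Hilbert space decomposed into mutually orthogonal subspaces with orthogonal projectors $\hat P_{A_\ell A_\ell}$, and let $\Phi_{CC}$ be a quantum channel on $\mathcal{H}_C$ with Kraus set $\{\hat M^{(j)}_{CC}\}_j$. Then $\Phi_{CC}$ admits the multi-block PCDS structure if and only if $\hat M^{(j)}_{CC}=\bigoplus_{\ell=1}^n\hat M^{(j)}_{A_\ell A_\ell}$ for all $j$, equivalently $\hat M^{(j)}_{A_\ell A_{\ell'}}=0$ for all $j$ and all $\ell\ne\ell'$, where $\hat M^{(j)}_{A_\ell A_{\ell'}}=\hat P_{A_\ell A_\ell}\hat M^{(j)}_{CC}\hat P_{A_{\ell'}A_{\ell'}}$.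
   Context: For an operator $\hat\Theta_{CC}$ on $\mathcal{H}_C$ let $\hat\Theta_{A_\ell A_{\ell'}}=\hat P_{A_\ell A_\ell}\hat\Theta_{CC}\hat P_{A_{\ell'}A_{\ell'}}$. A channel $\Phi_{CC}$ has the multi-block PCDS structure if there are linear maps $\Phi_{A_\ell A_\ell}$ on operators $\mathcal{H}_{A_\ell}\to\mathcal{H}_{A_\ell}$ and $\Phi^{(off)}_{A_\ell A_{\ell'}}$ ($\ell\neq\ell'$) on operators $\mathcal{H}_{A_{\ell'}}\to\mathcal{H}_{A_\ell}$ such that $\Phi_{CC}[\hat\Theta_{CC}]=\sum_{\ell}\Phi_{A_\ell A_\ell}[\hat\Theta_{A_\ell A_\ell}]+\sum_{\ell\neq\ell'}\Phi^{(off)}_{A_\ell A_{\ell'}}[\hat\Theta_{A_\ell A_{\ell'}}]$ for all $\hat\Theta_{CC}$. *)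

theory Defs
  imports "HOL-Analysis.Analysis"
begin

type_synonym 'd op = "complex^'d^'d"

definition adj :: "'d::finite op \<Rightarrow> 'd op" where
  "adj M = (\<chi> i j. cnj (M $ j $ i))"

definition cscale :: "complex \<Rightarrow> 'd::finite op \<Rightarrow> 'd op" where
  "cscale c M = (\<chi> i j. c * M $ i $ j)"

text \<open>Orthogonal decomposition H_C = H_A1 + ... + H_An given by orthogonal projectors P 0, ..., P (n-1).\<close>
definition orth_decomp :: "nat \<Rightarrow> (nat \<Rightarrow> 'd::finite op) \<Rightarrow> bool" where
  "orth_decomp n P \<longleftrightarrow>
     (\<forall>l<n. adj (P l) = P l \<and> P l ** P l = P l) \<and>
     (\<forall>l<n. \<forall>l'<n. l \<noteq> l' \<longrightarrow> P l ** P l' = 0) \<and>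
     (\<Sum>l<n. P l) = mat 1"

text \<open>Operators from H_{A_l'} to H_{A_l}, embedded as operators on H_C.\<close>
definition block_ops :: "(nat \<Rightarrow> 'd::finite op) \<Rightarrow> nat \<Rightarrow> nat \<Rightarrow> 'd op set" where
  "block_ops P l l' = {X. P l ** X ** P l' = X}"

definition lin_map_between :: "'d::finite op set \<Rightarrow> 'd op set \<Rightarrow> ('d op \<Rightarrow> 'd op) \<Rightarrow> bool" where
  "lin_map_between S T F \<longleftrightarrow>
     (\<forall>X\<in>S. F X \<in> T) \<and>
     (\<forall>X\<in>S. \<forall>Y\<in>S. F (X + Y) = F X + F Y) \<and>
     (\<forall>c. \<forall>X\<in>S. F (cscale c X) = cscale c (F X))"

definition block :: "(nat \<Rightarrow> 'd::finite op) \<Rightarrow> 'd op \<Rightarrow> nat \<Rightarrow> nat \<Rightarrow> 'd op" where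
  "block P Theta l l' = P l ** Theta ** P l'"

definition multi_block_PCDS :: "nat \<Rightarrow> (nat \<Rightarrow> 'd::finite op) \<Rightarrow> ('d op \<Rightarrow> 'd op) \<Rightarrow> bool" where
  "multi_block_PCDS n P Phi \<longleftrightarrow>
     (\<exists>Phi_diag :: nat \<Rightarrow> 'd op \<Rightarrow> 'd op. \<exists>Phi_off :: nat \<Rightarrow> nat \<Rightarrow> 'd op \<Rightarrow> 'd op.
        (\<forall>l<n. lin_map_between (block_ops P l l) (block_ops P l l) (Phi_diag l)) \<and>
        (\<forall>l<n. \<forall>l'<n. l \<noteq> l' \<longrightarrow>
            lin_map_between (block_ops P l l') (block_ops P l l') (Phi_off l l')) \<and>
        (\<forall>Theta. Phi Theta =
            (\<Sum>l<n. Phi_diag l (block P Theta l l)) +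
            (\<Sum>l<n. \<Sum>l'\<in>{..<n} - {l}. Phi_off l l' (block P Theta l l'))))"

definition kraus_channel :: "'j set \<Rightarrow> ('j \<Rightarrow> 'd::finite op) \<Rightarrow> ('d op \<Rightarrow> 'd op) \<Rightarrow> bool" where
  "kraus_channel J M Phi \<longleftrightarrow> finite J \<and>
     (\<Sum>j\<in>J. adj (M j) ** M j) = mat 1 \<and>
     (\<forall>Theta. Phi Theta = (\<Sum>j\<in>J. M j ** Theta ** adj (M j)))"

end

theory Submission
  imports Defs
begin

type_synonym 'd mop = "complex^'d^'d"

lemma mrd: "((A::'d::finite mop) + B) ** C = A ** C + B ** C"
  by (vector matrix_matrix_mult_def sum.distrib[symmetric] field_simps)

lemma msum_l: "(\<Sum>i\<in>S. (f i::'d mop)) ** (B::'d::finite mop) = (\<Sum>i\<in>S. f i ** B)"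
  by (induct S rule: infinite_finite_induct) (auto simp: mrd)

lemma msum_r: "(B::'d::finite mop) ** (\<Sum>i\<in>S. f i) = (\<Sum>i\<in>S. B ** f i)"
  by (induct S rule: infinite_finite_induct) (auto simp: matrix_add_ldistrib)

lemma adj_mul: "adj ((A::'d::finite mop) ** B) = adj B ** adj A"
  by (simp add: adj_def matrix_matrix_mult_def vec_eq_iff mult.commute)

lemma adj_adj[simp]: "adj (adj (A::'d::finite mop)) = A"
  by (simp add: adj_def vec_eq_iff)

lemma cscale_mul_r: "(A::'d::finite mop) ** cscale c B = cscale c (A ** B)"
  by (simp add: cscale_def matrix_matrix_mult_def vec_eq_iff sum_distrib_left algebra_simps)

lemma cscale_mul_l: "cscale c (A::'d::finite mop) ** B = cscale c (A ** B)"
  by (simp add: cscale_def matrix_matrix_mult_def vec_eq_iff sum_distrib_left algebra_simps)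

lemma cscale_sum: "cscale c (\<Sum>i\<in>S. (f i::'d::finite mop)) = (\<Sum>i\<in>S. cscale c (f i))"
  by (induct S rule: infinite_finite_induct) (auto simp: cscale_def vec_eq_iff algebra_simps)

lemma psd_zero:
  assumes "finite J" "(\<Sum>j\<in>J. (A j::'d::finite mop) ** adj (A j)) = 0" "j \<in> J"
  shows "A j = 0"
proof -
  have diag: "((\<Sum>j\<in>J. A j ** adj (A j)) $ i $ i) = of_real (\<Sum>j\<in>J. \<Sum>k\<in>UNIV. (cmod (A j $ i $ k))^2)" for i
  proof -
    have "((\<Sum>j\<in>J. A j ** adj (A j)) $ i $ i) = (\<Sum>j\<in>J. (A j ** adj (A j)) $ i $ i)"
      by (induct J rule: infinite_finite_induct) auto
    also have "\<dots> = (\<Sum>j\<in>J. \<Sum>k\<in>UNIV. of_real ((cmod (A j $ i $ k))^2))"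
      by (simp add: matrix_matrix_mult_def adj_def complex_norm_square del: of_real_power)
    finally show ?thesis by simp
  qed
  show ?thesis
  proof (rule vec_eq_iff[THEN iffD2], rule allI, rule vec_eq_iff[THEN iffD2], rule allI)
    fix i k
    have "complex_of_real (\<Sum>j\<in>J. \<Sum>k\<in>UNIV. (cmod (A j $ i $ k))^2) = 0"
      using diag[of i] assms(2) by (metis zero_index)
    hence "(\<Sum>j\<in>J. \<Sum>k\<in>UNIV. (cmod (A j $ i $ k))^2) = 0"
      by (simp only: of_real_eq_0_iff)
    hence "(\<Sum>k\<in>UNIV. (cmod (A j $ i $ k))^2) = 0"
      using assms(1,3) by (subst (asm) sum_nonneg_eq_0_iff) (auto intro: sum_nonneg)
    hence "(cmod (A j $ i $ k))^2 = 0"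
      by (subst (asm) sum_nonneg_eq_0_iff) auto
    thus "A j $ i $ k = 0 $ i $ k" by simp
  qed
qed


lemma lin_zero:
  fixes P :: "nat \<Rightarrow> 'd::finite mop" and F :: "'d mop \<Rightarrow> 'd mop"
  assumes "lin_map_between (block_ops P l l') (block_ops P l l') F"
  shows "F 0 = 0"
proof -
  have z: "(0::'d::finite mop) \<in> block_ops P l l'" by (simp add: block_ops_def)
  have "F (0 + 0) = F 0 + F 0" using assms z unfolding lin_map_between_def by blast
  thus ?thesis by simp
qed

theorem theorem3:
  fixes n :: nat and P :: "nat \<Rightarrow> complex^'d::finite^'d"
    and J :: "'j set" and M :: "'j \<Rightarrow> complex^'d^'d"
    and Phi :: "complex^'d^'d \<Rightarrow> complex^'d^'d"
  assumes "orth_decomp n P"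
    and "kraus_channel J M Phi"
  shows "(multi_block_PCDS n P Phi \<longleftrightarrow>
            (\<forall>j\<in>J. M j = (\<Sum>l<n. block P (M j) l l)))
       \<and> ((\<forall>j\<in>J. M j = (\<Sum>l<n. block P (M j) l l)) \<longleftrightarrow>
            (\<forall>j\<in>J. \<forall>l<n. \<forall>l'<n. l \<noteq> l' \<longrightarrow> block P (M j) l l' = 0))"
proof -
  have herm: "\<And>l. l < n \<Longrightarrow> adj (P l) = P l" and idem: "\<And>l. l < n \<Longrightarrow> P l ** P l = P l"
    and orth: "\<And>l l'. l < n \<Longrightarrow> l' < n \<Longrightarrow> l \<noteq> l' \<Longrightarrow> P l ** P l' = 0"
    and sumP: "(\<Sum>l<n. P l) = mat 1"
    using assms(1) unfolding orth_decomp_def by auto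
  have finJ: "finite J" and PhiD: "\<And>X. Phi X = (\<Sum>j\<in>J. M j ** X ** adj (M j))"
    using assms(2) unfolding kraus_channel_def by auto
  have decomp: "X = (\<Sum>l<n. \<Sum>l'<n. P l ** X ** P l')" for X
  proof -
    have "X = mat 1 ** X ** mat 1" by simp
    also have "\<dots> = (\<Sum>l<n. P l) ** X ** (\<Sum>l'<n. P l')" by (simp add: sumP)
    also have "\<dots> = (\<Sum>l<n. \<Sum>l'<n. P l ** X ** P l')"
      by (simp add: msum_l msum_r) (rule sum.swap)
    finally show ?thesis .
  qed
  have Phi_add: "Phi (X + Y) = Phi X + Phi Y" for X Y
    by (simp add: PhiD matrix_add_ldistrib mrd sum.distrib)
  have Phi_0: "Phi 0 = 0" by (simp add: PhiD)
  have Phi_sum: "Phi (\<Sum>i\<in>S. f i) = (\<Sum>i\<in>S. Phi (f i))" for S and f :: "nat \<Rightarrow> 'd mop"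
    by (induct S rule: infinite_finite_induct) (auto simp: Phi_add Phi_0)
  have Phi_sc: "Phi (cscale c X) = cscale c (Phi X)" for c X
    by (simp add: PhiD cscale_mul_l cscale_mul_r cscale_sum)
  
  have EQ2: "A = (\<Sum>l<n. block P A l l) \<longleftrightarrow> (\<forall>l<n. \<forall>l'<n. l \<noteq> l' \<longrightarrow> block P A l l' = 0)" for A
  proof
    assume A: "A = (\<Sum>l<n. block P A l l)"
    show "\<forall>l<n. \<forall>l'<n. l \<noteq> l' \<longrightarrow> block P A l l' = 0"
    proof (intro allI impI)
      fix l l' assume l: "l < n" "l' < n" "l \<noteq> l'"
      have "block P A l l' = P l ** (\<Sum>m<n. P m ** A ** P m) ** P l'"
        using A unfolding block_def by (metis (no_types, lifting) sum.cong)
      also have "\<dots> = (\<Sum>m<n. (P l ** P m) ** A ** (P m ** P l'))"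
        by (simp add: msum_l msum_r matrix_mul_assoc)
      also have "\<dots> = 0"
      proof (rule sum.neutral, rule ballI)
        fix m assume "m \<in> {..<n}"
        hence "m < n" by simp
        show "P l ** P m ** A ** (P m ** P l') = 0"
        proof (cases "m = l")
          case True thus ?thesis using l orth by simp
        next
          case False thus ?thesis using l orth \<open>m < n\<close> by simp
        qed
      qed
      finally show "block P A l l' = 0" .
    qed
  next
    assume H: "\<forall>l<n. \<forall>l'<n. l \<noteq> l' \<longrightarrow> block P A l l' = 0"
    have "A = (\<Sum>l<n. \<Sum>l'<n. P l ** A ** P l')" by (rule decomp)
    also have "\<dots> = (\<Sum>l<n. P l ** A ** P l + (\<Sum>l'\<in>{..<n}-{l}. P l ** A ** P l'))"
    proof (rule sum.cong[OF refl])
      fix l assume "l \<in> {..<n}"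
      thus "(\<Sum>l'<n. P l ** A ** P l') = P l ** A ** P l + (\<Sum>l'\<in>{..<n}-{l}. P l ** A ** P l')"
        by (subst sum.remove[of "{..<n}" l]) auto
    qed
    also have "\<dots> = (\<Sum>l<n. P l ** A ** P l)"
      by (rule sum.cong[OF refl], subst sum.neutral) (use H in \<open>auto simp: block_def\<close>)
    finally show "A = (\<Sum>l<n. block P A l l)" by (simp add: block_def)
  qed
  
  have comm: "P l ** A = A ** P l"
    if H: "\<forall>l<n. \<forall>l'<n. l \<noteq> l' \<longrightarrow> block P A l l' = 0" and l: "l < n" for A l
  proof -
    have "P l ** A = P l ** A ** (\<Sum>m<n. P m)" by (simp add: sumP)
    also have "\<dots> = (\<Sum>m<n. P l ** A ** P m)" by (simp add: msum_r)
    also have "\<dots> = P l ** A ** P l + (\<Sum>m\<in>{..<n}-{l}. P l ** A ** P m)"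
      by (subst sum.remove[of _ l]) (use l in auto)
    also have "\<dots> = P l ** A ** P l"
      by (subst sum.neutral) (use H l in \<open>auto simp: block_def\<close>)
    finally have 1: "P l ** A = P l ** A ** P l" .
    have "A ** P l = (\<Sum>m<n. P m) ** A ** P l" by (simp add: sumP)
    also have "\<dots> = (\<Sum>m<n. P m ** A ** P l)" by (simp add: msum_l)
    also have "\<dots> = P l ** A ** P l + (\<Sum>m\<in>{..<n}-{l}. P m ** A ** P l)"
      by (subst sum.remove[of _ l]) (use l in auto)
    also have "\<dots> = P l ** A ** P l"
      by (subst sum.neutral) (use H l in \<open>auto simp: block_def\<close>)
    finally show ?thesis using 1 by simp
  qed
  have comm_adj: "adj A ** P l = P l ** adj A"
    if H: "\<forall>l<n. \<forall>l'<n. l \<noteq> l' \<longrightarrow> block P A l l' = 0" and l: "l < n" for A l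
  proof -
    have "adj A ** P l = adj A ** adj (P l)" using herm l by simp
    also have "\<dots> = adj (P l ** A)" by (simp add: adj_mul)
    also have "\<dots> = adj (A ** P l)" using comm[OF H l] by simp
    also have "\<dots> = P l ** adj A" using herm l by (simp add: adj_mul)
    finally show ?thesis .
  qed
  have P1: "multi_block_PCDS n P Phi \<longleftrightarrow>
       (\<forall>j\<in>J. \<forall>l<n. \<forall>l'<n. l \<noteq> l' \<longrightarrow> block P (M j) l l' = 0)"
  proof
    assume "multi_block_PCDS n P Phi"
    then obtain Fd Fo where Fd: "\<forall>l<n. lin_map_between (block_ops P l l) (block_ops P l l) (Fd l)"
      and Fo: "\<forall>l<n. \<forall>l'<n. l \<noteq> l' \<longrightarrow> lin_map_between (block_ops P l l') (block_ops P l l') (Fo l l')"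
      and PhiE: "\<forall>Theta. Phi Theta = (\<Sum>l<n. Fd l (block P Theta l l)) +
            (\<Sum>l<n. \<Sum>l'\<in>{..<n} - {l}. Fo l l' (block P Theta l l'))"
      unfolding multi_block_PCDS_def by (elim exE conjE) assumption
    have Fd0: "m < n \<Longrightarrow> Fd m 0 = 0" for m using Fd lin_zero[of P m m "Fd m"] by simp
    have Fo0: "m < n \<Longrightarrow> m' < n \<Longrightarrow> m \<noteq> m' \<Longrightarrow> Fo m m' 0 = 0" for m m' using Fo lin_zero[of P m m' "Fo m m'"] by simp
    have PhiPl: "P l ** Phi (P l) ** P l = Phi (P l)" if l: "l < n" for l
    proof -
      have bl: "block P (P l) m m' = (if m = l \<and> m' = l then P l else 0)" if "m < n" "m' < n" for m m'
      proof (cases "m = l")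
        case True
        then show ?thesis using that l orth idem
          by (cases "m' = l") (auto simp: block_def)
      next
        case False
        then show ?thesis using that l orth[of m l] by (simp add: block_def)
      qed
      have s1: "(\<Sum>m<n. Fd m (block P (P l) m m)) = Fd l (P l)"
      proof -
        have "(\<Sum>m<n. Fd m (block P (P l) m m)) = (\<Sum>m<n. if m = l then Fd l (P l) else 0)"
          by (rule sum.cong) (auto simp: bl Fd0)
        thus ?thesis using l by simp
      qed
      have s2: "(\<Sum>m<n. \<Sum>m'\<in>{..<n} - {m}. Fo m m' (block P (P l) m m')) = 0"
        by (intro sum.neutral ballI) (auto simp: bl Fo0)
      have "Phi (P l) = Fd l (P l)" using PhiE s1 s2 by simp
      moreover have "P l \<in> block_ops P l l" using idem l by (simp add: block_ops_def)
      ultimately have "Phi (P l) \<in> block_ops P l l" using Fd l unfolding lin_map_between_def by auto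
      thus ?thesis by (simp add: block_ops_def)
    qed
    show "\<forall>j\<in>J. \<forall>l<n. \<forall>l'<n. l \<noteq> l' \<longrightarrow> block P (M j) l l' = 0"
    proof (intro ballI allI impI)
      fix j m l assume j: "j \<in> J" and m: "m < n" and l: "l < n" and ml: "m \<noteq> l"
      have "P m ** Phi (P l) ** P m = P m ** (P l ** Phi (P l) ** P l) ** P m" using PhiPl l by simp
      also have "\<dots> = (P m ** P l) ** Phi (P l) ** (P l ** P m)" by (simp add: matrix_mul_assoc)
      also have "\<dots> = 0" using orth m l ml by simp
      finally have z: "P m ** Phi (P l) ** P m = 0" .
      have trm: "(P m ** M i ** P l) ** adj (P m ** M i ** P l) = P m ** (M i ** P l ** adj (M i)) ** P m" for i
      proof -
        have "adj (P m ** M i ** P l) = P l ** adj (M i) ** P m"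
          using herm m l by (simp add: adj_mul matrix_mul_assoc)
        hence "(P m ** M i ** P l) ** adj (P m ** M i ** P l) = P m ** M i ** (P l ** P l) ** adj (M i) ** P m"
          by (simp add: matrix_mul_assoc)
        thus ?thesis using idem l by (simp add: matrix_mul_assoc)
      qed
      have "(\<Sum>i\<in>J. (P m ** M i ** P l) ** adj (P m ** M i ** P l)) = P m ** Phi (P l) ** P m"
        by (simp add: trm PhiD msum_l msum_r)
      with z have "(\<Sum>i\<in>J. (P m ** M i ** P l) ** adj (P m ** M i ** P l)) = 0" by simp
      from psd_zero[OF finJ this j] show "block P (M j) m l = 0" by (simp add: block_def)
    qed
  next
    assume H: "\<forall>j\<in>J. \<forall>l<n. \<forall>l'<n. l \<noteq> l' \<longrightarrow> block P (M j) l l' = 0"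
    have pres: "P l ** Phi X ** P l' = Phi X" if X: "P l ** X ** P l' = X" and l: "l < n" "l' < n" for X l l'
    proof -
      have "P l ** Phi X ** P l' = (\<Sum>j\<in>J. P l ** (M j ** X ** adj (M j)) ** P l')"
        by (simp add: PhiD msum_l msum_r)
      also have "\<dots> = (\<Sum>j\<in>J. M j ** (P l ** X ** P l') ** adj (M j))"
      proof (rule sum.cong[OF refl])
        fix j assume j: "j \<in> J"
        have c1: "P l ** M j = M j ** P l" using comm H j l by blast
        have c2: "adj (M j) ** P l' = P l' ** adj (M j)" using comm_adj H j l by blast
        have "P l ** (M j ** X ** adj (M j)) ** P l' = (P l ** M j) ** X ** (adj (M j) ** P l')"
          by (simp add: matrix_mul_assoc)
        also have "\<dots> = M j ** (P l ** X ** P l') ** adj (M j)"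
          by (simp add: c1 c2 matrix_mul_assoc)
        finally show "P l ** (M j ** X ** adj (M j)) ** P l' = M j ** (P l ** X ** P l') ** adj (M j)" .
      qed
      also have "\<dots> = Phi X" using X by (simp add: PhiD)
      finally show ?thesis .
    qed
    have lin: "lin_map_between (block_ops P l l') (block_ops P l l') Phi" if "l < n" "l' < n" for l l'
      using pres[OF _ that] by (auto simp: lin_map_between_def block_ops_def Phi_add Phi_sc)
    have dec: "Phi Theta = (\<Sum>l<n. Phi (block P Theta l l)) +
            (\<Sum>l<n. \<Sum>l'\<in>{..<n} - {l}. Phi (block P Theta l l'))" for Theta
    proof -
      have "Phi Theta = (\<Sum>l<n. \<Sum>l'<n. Phi (block P Theta l l'))"
        by (subst decomp[of Theta]) (simp add: Phi_sum block_def)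
      also have "\<dots> = (\<Sum>l<n. Phi (block P Theta l l) + (\<Sum>l'\<in>{..<n} - {l}. Phi (block P Theta l l')))"
      proof (rule sum.cong[OF refl])
        fix l assume "l \<in> {..<n}"
        thus "(\<Sum>l'<n. Phi (block P Theta l l')) = Phi (block P Theta l l) + (\<Sum>l'\<in>{..<n} - {l}. Phi (block P Theta l l'))"
          by (subst sum.remove[of "{..<n}" l]) auto
      qed
      also have "\<dots> = (\<Sum>l<n. Phi (block P Theta l l)) +
            (\<Sum>l<n. \<Sum>l'\<in>{..<n} - {l}. Phi (block P Theta l l'))"
        by (rule sum.distrib)
      finally show ?thesis .
    qed
    show "multi_block_PCDS n P Phi"
      unfolding multi_block_PCDS_def
    proof (rule exI[of _ "\<lambda>l. Phi"], rule exI[of _ "\<lambda>l l'. Phi"], intro conjI allI impI)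
      show "\<And>l. l < n \<Longrightarrow> lin_map_between (block_ops P l l) (block_ops P l l) Phi" using lin by blast
      show "\<And>l l'. l < n \<Longrightarrow> l' < n \<Longrightarrow> l \<noteq> l' \<Longrightarrow> lin_map_between (block_ops P l l') (block_ops P l l') Phi"
        using lin by blast
      show "\<And>Theta. Phi Theta = (\<Sum>l<n. Phi (block P Theta l l)) +
            (\<Sum>l<n. \<Sum>l'\<in>{..<n} - {l}. Phi (block P Theta l l'))" by (rule dec)
    qed
  qed
  show ?thesis using P1 EQ2 by blast
qed

end
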